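(* Let $\mathcal{C}=(C_1,\ldots,C_m)$ be a camera arrangement. (1) Let $L\subseteq\mathbb{P}^3$ be a line containing no center. Let $\phi_L:L\to\mathbb{P}^1$ and $\psi_i:C_i\cdot L\to\mathbb{P}^1$ ($i=1,\ldots,m$) be any linear isomorphisms, and let $\widetilde{\mathcal{C}}=(\widetilde C_1,\ldots,\widetilde C_m)$ with $\widetilde C_i=\psi_i\circ C_i\circ\phi_L^{-1}$ (a $2\times2$ matrix). Then $(\psi_1,\ldots,\psi_m):\mathcal{M}_\mathcal{C}^L\to\mathcal{M}^{1,1}_{\widetilde{\mathcal{C}}}$ is a linear isomorphism. (2) Let $X\in\mathbb{P}^3$ be distinct from all centers. Let $\phi_X:\Lambda(X)\to\mathbb{P}^2$ and $\psi_i:\Lambda(C_iX)\to\mathbb{P}^1$ ($i=1,\ldots,m$) be any linear isomorphisms, and let $\widehat{\mathcal{C}}=(\widehat C_1,\ldots,\widehat C_m)$ with $\widehat C_i=\psi_i\circ C_i\circ\phi_X^{-1}$ (a $2\times 3$ matrix). Then $(\psi_1,\ldots,\psi_m):\mathcal{L}_\mathcal{C}^X\to\mathcal{M}^{2,1}_{\widehat{\mathcal{C}}}$ is a linear isomorphism.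
   Context: All spaces are complex projective. A camera is a full-rank $3\times4$ complex matrix $C:\mathbb{P}^3\dashrightarrow\mathbb{P}^2$ with center its kernel; a camera arrangement $\mathcal{C}=(C_1,\ldots,C_m)$, $m\ge 2$, has pairwise distinct centers. For a line $L$ spanned by $u,v$, $C\cdot L:=Cu\times Cv\in\mathbb{P}^2$, identified with the image line $\{x:(C\cdot L)^Tx=0\}\subseteq\mathbb{P}^2$ (a copy of $\mathbb{P}^1$). $\Lambda(X)$ is the set of lines in $\mathbb{P}^3$ through $X$ (a plane in the Plücker embedding of the Grassmannian of lines), and for a point $y\in\mathbb{P}^2$, $\Lambda(y)$ is the set of lines in $\mathbb{P}^2$ through $y$ (a line in the dual plane); $C_i$ maps a line through $X$ not through $c_i$ to a line through $C_iX$, so $C_i\circ\phi_X^{-1}$ is a linear map $\mathbb{P}^2\dashrightarrow\Lambda(C_iX)$. $\mathcal{M}_\mathcal{C}^L$ is the Zariski closure of the image of $L\ni Y\mapsto(C_1Y,\ldots,C_mY)$; $\mathcal{L}_\mathcal{C}^X$ is the Zariski closure of the image of $\Lambda(X)\ni L'\mapsto(C_1\cdot L',\ldots,C_m\cdot L')$. For an arrangement $\widetilde{\mathcal{C}}$ of full-rank $2\times2$ matrices, $\mathcal{M}^{1,1}_{\widetilde{\mathcal{C}}}\subseteq(\mathbb{P}^1)^m$ is the Zariski closure of the image of $\mathbb{P}^1\ni Y\mapsto(\widetilde C_1Y,\ldots,\widetilde C_mY)$; for an arrangement $\widehat{\mathcal{C}}$ of full-rank $2\times 3$ matrices, $\mathcal{M}^{2,1}_{\widehat{\mathcal{C}}}\subseteq(\mathbb{P}^1)^m$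 is the Zariski closure of the image of $\mathbb{P}^2\dashrightarrow(\mathbb{P}^1)^m$, $Y\mapsto(\widehat C_1Y,\ldots,\widehat C_mY)$. A linear isomorphism means an invertible linear map. *)

theory Defs
  imports "HOL-Analysis.Analysis"
begin

text \<open>Conventions. A point of P^n is represented by any nonzero vector of complex^(n+1).
  A subset of a product of projective spaces P^(n-1) x ... x P^(n-1) (one factor per
  index in the finite type 'm) is represented by the set of all tuples of representatives,
  i.e. functions y :: 'm => complex^'n with every y i nonzero.\<close>

text \<open>Bilinear (non-Hermitian) dot product and cross product on complex^3.\<close>
definition bdot :: "complex^'n \<Rightarrow> complex^'n \<Rightarrow> complex" where
  "bdot x y = (\<Sum>k\<in>UNIV. x $ k * y $ k)"

definition ccross :: "complex^3 \<Rightarrow> complex^3 \<Rightarrow> complex^3" where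
  "ccross a b = vector [a$2 * b$3 - a$3 * b$2, a$3 * b$1 - a$1 * b$3, a$1 * b$2 - a$2 * b$1]"

text \<open>Monomials and multihomogeneous polynomials on tuples of vectors.\<close>
definition monom :: "('m::finite \<Rightarrow> 'n::finite \<Rightarrow> nat) \<Rightarrow> ('m \<Rightarrow> complex^'n) \<Rightarrow> complex" where
  "monom e y = (\<Prod>i\<in>UNIV. \<Prod>j\<in>UNIV. (y i $ j) ^ (e i j))"

definition multihom_poly ::
  "('m::finite \<Rightarrow> nat) \<Rightarrow> (('m \<Rightarrow> complex^'n::finite) \<Rightarrow> complex) \<Rightarrow> bool" where
  "multihom_poly d p \<longleftrightarrow> (\<exists>E coef. finite E \<and> (\<forall>e\<in>E. \<forall>i. (\<Sum>j\<in>UNIV. e i j) = d i) \<and>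
      p = (\<lambda>y. \<Sum>e\<in>E. coef e * monom e y))"

text \<open>Zariski closure in the product of projective spaces (closed sets are common zero sets
  of multihomogeneous polynomials).\<close>
definition zariski_closure :: "('m::finite \<Rightarrow> complex^'n::finite) set \<Rightarrow> ('m \<Rightarrow> complex^'n) set" where
  "zariski_closure S = {y. (\<forall>i. y i \<noteq> 0) \<and>
      (\<forall>d p. multihom_poly d p \<and> (\<forall>z\<in>S. p z = 0) \<longrightarrow> p y = 0)}"

text \<open>Equality of tuples of projective points (componentwise up to nonzero scalars).\<close>
definition proj_tuple_eq :: "('m \<Rightarrow> complex^'n) \<Rightarrow> ('m \<Rightarrow> complex^'n) \<Rightarrow> bool" where
  "proj_tuple_eq y z \<longleftrightarrow> (\<forall>i. \<exists>c. c \<noteq> 0 \<and> z i = c *s y i)"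

text \<open>Camera arrangement: full-rank 3x4 matrices with pairwise distinct centers (kernels).\<close>
definition is_center :: "complex^4^3 \<Rightarrow> complex^4 \<Rightarrow> bool" where
  "is_center C c \<longleftrightarrow> c \<noteq> 0 \<and> C *v c = 0"

definition camera_arrangement :: "('m::finite \<Rightarrow> complex^4^3) \<Rightarrow> bool" where
  "camera_arrangement C \<longleftrightarrow> CARD('m) \<ge> 2 \<and> (\<forall>i. rank (C i) = 3) \<and>
     (\<forall>i j. i \<noteq> j \<longrightarrow> \<not> (\<exists>c. is_center (C i) c \<and> is_center (C j) c))"

text \<open>A line L in P^3 spanned by u, v (linearly independent) corresponds to the 2-dim subspace
  vec.span {u,v}. C.L := Cu x Cv; the image line is {x. (C.L)^T x = 0}.\<close>
definition cam_line :: "complex^4^3 \<Rightarrow> complex^4 \<Rightarrow> complex^4 \<Rightarrow> complex^3" where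
  "cam_line C u v = ccross (C *v u) (C *v v)"

definition image_line :: "complex^3 \<Rightarrow> (complex^3) set" where
  "image_line l = {x. bdot l x = 0}"

text \<open>Lines through a point y of P^2: a line in the dual plane.\<close>
definition dual_pencil :: "complex^3 \<Rightarrow> (complex^3) set" where
  "dual_pencil y = {l. bdot l y = 0}"

text \<open>Pluecker coordinates of the line spanned by u and v.\<close>
definition pluecker :: "complex^4 \<Rightarrow> complex^4 \<Rightarrow> complex^6" where
  "pluecker u v = vector [u$1* v$2 - u$2* v$1, u$1* v$3 - u$3* v$1, u$1* v$4 - u$4* v$1,
                          u$2* v$3 - u$3* v$2, u$2* v$4 - u$4* v$2, u$3* v$4 - u$4* v$3]"

text \<open>Lambda(X) in the Pluecker embedding: the (cone over the) plane of Pluecker vectors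
  of lines through X, i.e. the 3-dimensional linear space {pluecker X Z | Z}.\<close>
definition Lambda_pt :: "complex^4 \<Rightarrow> (complex^6) set" where
  "Lambda_pt X = range (pluecker X)"

text \<open>C applied to the line through X with Pluecker vector p (p in Lambda_pt X):
  choose Z with p = pluecker X Z; the line is spanned by X and Z.\<close>
definition cam_on_Lambda :: "complex^4^3 \<Rightarrow> complex^4 \<Rightarrow> complex^6 \<Rightarrow> complex^3" where
  "cam_on_Lambda C X p = cam_line C X (SOME Z. pluecker X Z = p)"

text \<open>The varieties.\<close>
definition M_line :: "('m::finite \<Rightarrow> complex^4^3) \<Rightarrow> complex^4 \<Rightarrow> complex^4 \<Rightarrow> ('m \<Rightarrow> complex^3) set" where
  "M_line C u v = zariski_closure
     {(\<lambda>i. C i *v Y) | Y. Y \<in> vec.span {u, v} \<and> Y \<noteq> 0 \<and> (\<forall>i. C i *v Y \<noteq> 0)}"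

definition L_point :: "('m::finite \<Rightarrow> complex^4^3) \<Rightarrow> complex^4 \<Rightarrow> ('m \<Rightarrow> complex^3) set" where
  "L_point C X = zariski_closure
     {(\<lambda>i. cam_line (C i) X Z) | Z. vec.independent {X, Z} \<and> X \<noteq> Z \<and> (\<forall>i. cam_line (C i) X Z \<noteq> 0)}"

definition M11 :: "('m::finite \<Rightarrow> complex^2^2) \<Rightarrow> ('m \<Rightarrow> complex^2) set" where
  "M11 A = zariski_closure {(\<lambda>i. A i *v Y) | Y. Y \<noteq> 0 \<and> (\<forall>i. A i *v Y \<noteq> 0)}"

definition M21 :: "('m::finite \<Rightarrow> complex^3^2) \<Rightarrow> ('m \<Rightarrow> complex^2) set" where
  "M21 A = zariski_closure {(\<lambda>i. A i *v Y) | Y. Y \<noteq> 0 \<and> (\<forall>i. A i *v Y \<noteq> 0)}"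

end

theory Submission
  imports Defs
begin


lemma vlinI:
  fixes f :: "'a::field^'n \<Rightarrow> 'a^'k"
  assumes "\<And>x y. f (x+y) = f x + f y" "\<And>c x. f (c *s x) = c *s f x"
  shows "Vector_Spaces.linear (*s) (*s) f"
  using assms by (simp add: Vector_Spaces.linear_def module_hom_axioms_def module_hom_def vec.vector_space_axioms
     vec.module_axioms vector_space_def module_def)

lemma multihom_polyI:
  assumes "finite A" "\<And>x i. x \<in> A \<Longrightarrow> (\<Sum>j\<in>UNIV. g x i j) = d i"
    "\<And>y. p y = (\<Sum>x\<in>A. c x * monom (g x) y)"
  shows "multihom_poly d p"
proof -
  define coef where "coef e = (\<Sum>x\<in>{x\<in>A. g x = e}. c x)" for e
  have "p y = (\<Sum>e\<in>g ` A. coef e * monom e y)" for y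
  proof -
    have "(\<Sum>e\<in>g ` A. coef e * monom e y) = (\<Sum>e\<in>g ` A. \<Sum>x\<in>{x\<in>A. g x = e}. c x * monom (g x) y)"
      unfolding coef_def sum_distrib_right by (rule sum.cong) auto
    also have "\<dots> = (\<Sum>x\<in>A. c x * monom (g x) y)"
      by (rule sum.group) (use assms in auto)
    finally show ?thesis using assms(3) by simp
  qed
  then show ?thesis unfolding multihom_poly_def
    using assms by (intro exI[of _ "g ` A"] exI[of _ coef]) auto
qed

lemma multihom_polyE:
  assumes "multihom_poly d p"
  obtains E coef where "finite E" "\<And>e i. e \<in> E \<Longrightarrow> (\<Sum>j\<in>UNIV. e i j) = d i"
    "\<And>y. p y = (\<Sum>e\<in>E. coef e * monom e y)"
  using assms unfolding multihom_poly_def by metis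

lemma mp_add:
  assumes "multihom_poly d p" "multihom_poly d q"
  shows "multihom_poly d (\<lambda>y. p y + q y)"
proof -
  obtain E1 c1 where 1: "finite E1" "\<And>e i. e \<in> E1 \<Longrightarrow> (\<Sum>j\<in>UNIV. e i j) = d i"
    "\<And>y. p y = (\<Sum>e\<in>E1. c1 e * monom e y)" using assms(1) by (rule multihom_polyE) blast
  obtain E2 c2 where 2: "finite E2" "\<And>e i. e \<in> E2 \<Longrightarrow> (\<Sum>j\<in>UNIV. e i j) = d i"
    "\<And>y. q y = (\<Sum>e\<in>E2. c2 e * monom e y)" using assms(2) by (rule multihom_polyE) blast
  show ?thesis
    apply (rule multihom_polyI[where A="E1 <+> E2" and g="case_sum id id" and c="case_sum c1 c2"])
    using 1 2 by (auto simp: sum.Plus o_def)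
qed

lemma mp_scale:
  assumes "multihom_poly d p"
  shows "multihom_poly d (\<lambda>y. a * p y)"
proof -
  obtain E1 c1 where 1: "finite E1" "\<And>e i. e \<in> E1 \<Longrightarrow> (\<Sum>j\<in>UNIV. e i j) = d i"
    "\<And>y. p y = (\<Sum>e\<in>E1. c1 e * monom e y)" using assms(1) by (rule multihom_polyE) blast
  show ?thesis
    apply (rule multihom_polyI[where A="E1" and g="id" and c="\<lambda>e. a * c1 e"])
    using 1 by (auto simp: sum_distrib_left mult.assoc)
qed

lemma mp_zero: "multihom_poly d (\<lambda>y. 0)"
  by (rule multihom_polyI[where A="{}"]) auto

lemma mp_one: "multihom_poly (\<lambda>_. 0) (\<lambda>y. 1)"
  by (rule multihom_polyI[where A="{()}" and g="\<lambda>_ i j. 0" and c="\<lambda>_. 1"]) (auto simp: monom_def)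

lemma monom_add: "monom (\<lambda>i j. e i j + f i j) y = monom e y * monom f y"
  by (simp add: monom_def power_add prod.distrib)

lemma mp_mult:
  assumes "multihom_poly d1 p" "multihom_poly d2 q"
  shows "multihom_poly (\<lambda>i. d1 i + d2 i) (\<lambda>y. p y * q y)"
proof -
  obtain E1 c1 where 1: "finite E1" "\<And>e i. e \<in> E1 \<Longrightarrow> (\<Sum>j\<in>UNIV. e i j) = d1 i"
    "\<And>y. p y = (\<Sum>e\<in>E1. c1 e * monom e y)" using assms(1) by (rule multihom_polyE) blast
  obtain E2 c2 where 2: "finite E2" "\<And>e i. e \<in> E2 \<Longrightarrow> (\<Sum>j\<in>UNIV. e i j) = d2 i"
    "\<And>y. q y = (\<Sum>e\<in>E2. c2 e * monom e y)" using assms(2) by (rule multihom_polyE) blast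
  show ?thesis
  proof (rule multihom_polyI[where A="E1 \<times> E2" and g="\<lambda>(e,f) i j. e i j + f i j"
        and c="\<lambda>(e,f). c1 e * c2 f"])
    fix y
    have "p y * q y = (\<Sum>e\<in>E1. \<Sum>f\<in>E2. (c1 e * monom e y) * (c2 f * monom f y))"
      by (simp add: 1 2 sum_product)
    also have "\<dots> = (\<Sum>(e,f)\<in>E1 \<times> E2. (c1 e * monom e y) * (c2 f * monom f y))"
      by (rule sum.cartesian_product)
    also have "\<dots> = (\<Sum>x\<in>E1 \<times> E2. (case x of (e,f) \<Rightarrow> c1 e * c2 f) * monom ((\<lambda>(e,f) i j. e i j + f i j) x) y)"
      by (rule sum.cong) (auto simp: monom_add)
    finally show "p y * q y = \<dots>" .
  qed (use 1 2 in \<open>auto simp: sum.distrib\<close>)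
qed

lemma mp_cong: "multihom_poly d p \<Longrightarrow> d = d' \<Longrightarrow> multihom_poly d' p" by simp

lemma mp_prod:
  assumes "finite K" "\<And>k. k \<in> K \<Longrightarrow> multihom_poly (d k) (p k)"
  shows "multihom_poly (\<lambda>i. \<Sum>k\<in>K. d k i) (\<lambda>y. \<Prod>k\<in>K. p k y)"
  using assms
proof (induction K rule: finite_induct)
  case empty
  then show ?case using mp_one by simp
next
  case (insert x F)
  have "multihom_poly (\<lambda>i. d x i + (\<Sum>k\<in>F. d k i)) (\<lambda>y. p x y * (\<Prod>k\<in>F. p k y))"
    by (rule mp_mult) (use insert in auto)
  then show ?case using insert by simp
qed

lemma mp_sum:
  assumes "finite K" "\<And>k. k \<in> K \<Longrightarrow> multihom_poly d (p k)"
  shows "multihom_poly d (\<lambda>y. \<Sum>k\<in>K. p k y)"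
  using assms
proof (induction K rule: finite_induct)
  case empty
  then show ?case using mp_zero by simp
next
  case (insert x F)
  have "multihom_poly d (\<lambda>y. p x y + (\<Sum>k\<in>F. p k y))"
    by (rule mp_add) (use insert in auto)
  then show ?case using insert by simp
qed

lemma mp_power:
  assumes "multihom_poly d p"
  shows "multihom_poly (\<lambda>i. n * d i) (\<lambda>y. p y ^ n)"
  using mp_prod[of "{..<n}" "\<lambda>_. d" "\<lambda>_. p"] assms by simp

lemma mp_coord: "multihom_poly (\<lambda>i'. if i' = i then 1 else 0) (\<lambda>y. y i $ k)"
proof (rule multihom_polyI[where A="{()}" and g="\<lambda>_ i' j. if i' = i \<and> j = k then 1 else 0" and c="\<lambda>_. 1"])
  fix y :: "'a \<Rightarrow> complex^'b"
  have 1: "(\<Prod>j\<in>UNIV. (y i' $ j) ^ (if i' = i \<and> j = k then 1 else 0)) = (if i' = i then y i' $ k else 1)" for i'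
  proof (cases "i' = i")
    case True
    have "(\<Prod>j\<in>UNIV. (y i' $ j) ^ (if i' = i \<and> j = k then 1 else 0)) = (\<Prod>j\<in>UNIV. if k = j then y i' $ j else 1)"
      by (rule prod.cong) (auto simp: True)
    also have "\<dots> = y i' $ k" by (rule trans[OF prod.delta']) simp_all
    finally show ?thesis using True by simp
  qed simp
  have "monom (\<lambda>i' j. if i' = i \<and> j = k then 1 else 0) y = (\<Prod>i'\<in>UNIV. if i = i' then y i' $ k else 1)"
    unfolding monom_def 1 by (rule prod.cong) auto
  also have "\<dots> = y i $ k" by (rule trans[OF prod.delta']) simp_all
  finally show "y i $ k = (\<Sum>x\<in>{()}. 1 * monom (\<lambda>i' j. if i' = i \<and> j = k then 1 else 0) y)" by simp
next
  fix x i' assume "x \<in> {()}"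
  show "(\<Sum>j\<in>UNIV. if i' = i \<and> j = k then 1 else 0) = (if i' = i then 1 else (0::nat))"
    by (cases "i' = i") (simp_all add: sum.delta')
qed simp

lemma mp_linform: "multihom_poly (\<lambda>i'. if i' = i then 1 else 0) (\<lambda>y. \<Sum>k\<in>UNIV. a k * y i $ k)"
  by (rule mp_sum) (simp, rule mp_scale, rule mp_coord)

lemma mp_comp:
  fixes A :: "'m::finite \<Rightarrow> complex^'n::finite^'k::finite"
  assumes "multihom_poly d p"
  shows "multihom_poly d (\<lambda>y. p (\<lambda>i. A i *v y i))"
proof -
  obtain E c where 1: "finite E" "\<And>e i. e \<in> E \<Longrightarrow> (\<Sum>j\<in>UNIV. e i j) = d i"
    "\<And>y. p y = (\<Sum>e\<in>E. c e * monom e y)" using assms(1) by (rule multihom_polyE) blast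
  have "multihom_poly d (\<lambda>y. \<Sum>e\<in>E. c e * monom e (\<lambda>i. A i *v y i))"
  proof (rule mp_sum[OF 1(1)], rule mp_scale)
    fix e assume e: "e \<in> E"
    have L: "multihom_poly (\<lambda>i'. if i' = i then 1 else 0) (\<lambda>y. \<Sum>k\<in>UNIV. (A i $ j $ k) * y i $ k)" for i j
      by (rule mp_linform)
    have P: "multihom_poly (\<lambda>i'. e i j * (if i' = i then 1 else 0)) (\<lambda>y. (\<Sum>k\<in>UNIV. (A i $ j $ k) * y i $ k) ^ e i j)" for i j
      by (rule mp_power[OF L])
    have Q: "multihom_poly (\<lambda>i'. \<Sum>j\<in>UNIV. e i j * (if i' = i then 1 else 0)) (\<lambda>y. \<Prod>j\<in>UNIV. (\<Sum>k\<in>UNIV. (A i $ j $ k) * y i $ k) ^ e i j)" for i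
      by (rule mp_prod) (simp, rule P)
    have "multihom_poly (\<lambda>i'. \<Sum>i\<in>UNIV. \<Sum>j\<in>UNIV. e i j * (if i' = i then 1 else 0))
       (\<lambda>y. \<Prod>i\<in>UNIV. \<Prod>j\<in>UNIV. (\<Sum>k\<in>UNIV. (A i $ j $ k) * y i $ k) ^ e i j)"
      by (rule mp_prod) (simp, rule Q)
    moreover have "(\<lambda>i'. \<Sum>i\<in>UNIV. \<Sum>j\<in>UNIV. e i j * (if i' = i then 1 else 0)) = d"
    proof
      fix i'
      have "(\<Sum>i\<in>UNIV. \<Sum>j\<in>UNIV. e i j * (if i' = i then 1 else 0)) = (\<Sum>i\<in>UNIV. if i' = i then (\<Sum>j\<in>UNIV. e i j) else 0)"
        by (rule sum.cong) auto
      then show "(\<Sum>i\<in>UNIV. \<Sum>j\<in>UNIV. e i j * (if i' = i then 1 else 0)) = d i'"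
        using 1(2)[OF e] by simp
    qed
    moreover have "(\<lambda>y. \<Prod>i\<in>UNIV. \<Prod>j\<in>UNIV. (\<Sum>k\<in>UNIV. (A i $ j $ k) * y i $ k) ^ e i j)
       = (\<lambda>y. monom e (\<lambda>i. A i *v y i))"
      unfolding monom_def matrix_vector_mult_def vec_lambda_beta ..
    ultimately show "multihom_poly d (\<lambda>y. monom e (\<lambda>i. A i *v y i))"
      by simp
  qed
  moreover have "(\<lambda>y. p (\<lambda>i. A i *v y i)) = (\<lambda>y. \<Sum>e\<in>E. c e * monom e (\<lambda>i. A i *v y i))"
    using 1(3) by blast
  ultimately show ?thesis by simp
qed



lemma linear_inv_sub:
  fixes f :: "complex^'n \<Rightarrow> complex^'k"
  assumes lin: "Vector_Spaces.linear (*s) (*s) f" and bij: "bij_betw f V UNIV"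
    and add: "\<And>x y. x \<in> V \<Longrightarrow> y \<in> V \<Longrightarrow> x + y \<in> V"
    and sc: "\<And>c x. x \<in> V \<Longrightarrow> c *s x \<in> V"
  shows "Vector_Spaces.linear (*s) (*s) (inv_into V f)"
proof -
  have inj: "inj_on f V" and sur: "f ` V = UNIV" using bij by (auto simp: bij_betw_def)
  have gV: "inv_into V f z \<in> V" for z using sur by (metis UNIV_I inv_into_into)
  have fg: "f (inv_into V f z) = z" for z using sur by (simp add: f_inv_into_f)
  show ?thesis
  proof (rule vlinI)
    fix x y
    show "inv_into V f (x + y) = inv_into V f x + inv_into V f y"
      by (rule inj_onD[OF inj]) (auto simp: gV fg add vec.linear_add[OF lin])
  next
    fix c x
    show "inv_into V f (c *s x) = c *s inv_into V f x"
      by (rule inj_onD[OF inj]) (auto simp: gV fg sc vec.linear_scale[OF lin])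
  qed
qed

lemma transfer:
  fixes S :: "('m::finite \<Rightarrow> complex^'n::finite) set" and \<psi> :: "'m \<Rightarrow> complex^'n \<Rightarrow> complex^'k::finite"
  assumes lin: "\<And>i. Vector_Spaces.linear (*s) (*s) (\<psi> i)"
    and bij: "\<And>i. bij_betw (\<psi> i) {x. bdot (a i) x = 0} UNIV"
    and SV: "\<And>s i. s \<in> S \<Longrightarrow> bdot (a i) (s i) = 0"
  shows "(\<lambda>y i. \<psi> i (y i)) ` zariski_closure S = zariski_closure ((\<lambda>y i. \<psi> i (y i)) ` S)"
    and "\<forall>y\<in>zariski_closure S. \<forall>y'\<in>zariski_closure S.
           proj_tuple_eq (\<lambda>i. \<psi> i (y i)) (\<lambda>i. \<psi> i (y' i)) \<longrightarrow> proj_tuple_eq y y'"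
proof -
  define V where "V i = {x. bdot (a i) x = 0}" for i
  define \<sigma> where "\<sigma> i = inv_into (V i) (\<psi> i)" for i
  have inj: "inj_on (\<psi> i) (V i)" and sur: "\<psi> i ` V i = UNIV" for i
    using bij[of i] by (auto simp: bij_betw_def V_def)
  have Vadd: "x \<in> V i \<Longrightarrow> y \<in> V i \<Longrightarrow> x + y \<in> V i" for x y i
    by (simp add: V_def bdot_def distrib_left sum.distrib)
  have Vsc: "x \<in> V i \<Longrightarrow> c *s x \<in> V i" for x c i
  proof -
    assume "x \<in> V i"
    then have "(\<Sum>k\<in>UNIV. a i $ k * x $ k) = 0" by (simp add: V_def bdot_def)
    then have "c * (\<Sum>k\<in>UNIV. a i $ k * x $ k) = 0" by simp
    then show ?thesis by (simp add: V_def bdot_def sum_distrib_left algebra_simps)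
  qed
  have V0: "0 \<in> V i" for i by (simp add: V_def bdot_def)
  have lin\<sigma>: "Vector_Spaces.linear (*s) (*s) (\<sigma> i)" for i
    unfolding \<sigma>_def by (rule linear_inv_sub[OF lin]) (use bij[of i] Vadd Vsc in \<open>auto simp: V_def\<close>)
  have \<sigma>V: "\<sigma> i z \<in> V i" for i z unfolding \<sigma>_def using sur[of i] by (metis UNIV_I inv_into_into)
  have \<psi>\<sigma>: "\<psi> i (\<sigma> i z) = z" for i z unfolding \<sigma>_def using sur[of i] by (simp add: f_inv_into_f)
  have \<sigma>\<psi>: "x \<in> V i \<Longrightarrow> \<sigma> i (\<psi> i x) = x" for i x unfolding \<sigma>_def using inj[of i] by simp
  have \<psi>0: "x \<in> V i \<Longrightarrow> \<psi> i x = 0 \<longleftrightarrow> x = 0" for x i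
    using inj_onD[OF inj _ _ V0, of i x] vec.linear_0[OF lin] by metis
  have clV: "y i \<in> V i" if "y \<in> zariski_closure S" for y i
  proof -
    have "multihom_poly (\<lambda>i'. if i' = i then 1 else 0) (\<lambda>y. \<Sum>k\<in>UNIV. a i $ k * y i $ k)"
      by (rule mp_linform)
    moreover have "\<forall>z\<in>S. (\<Sum>k\<in>UNIV. a i $ k * z i $ k) = 0" using SV by (simp add: bdot_def)
    ultimately have "(\<Sum>k\<in>UNIV. a i $ k * y i $ k) = 0"
      using that unfolding zariski_closure_def by blast
    then show ?thesis by (simp add: V_def bdot_def)
  qed
  have SV': "s \<in> S \<Longrightarrow> s i \<in> V i" for s i using SV by (simp add: V_def)
  show "(\<lambda>y i. \<psi> i (y i)) ` zariski_closure S = zariski_closure ((\<lambda>y i. \<psi> i (y i)) ` S)"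
  proof
    show "(\<lambda>y i. \<psi> i (y i)) ` zariski_closure S \<subseteq> zariski_closure ((\<lambda>y i. \<psi> i (y i)) ` S)"
    proof (clarify)
      fix y assume y: "y \<in> zariski_closure S"
      have nz: "\<psi> i (y i) \<noteq> 0" for i
        using y clV[OF y, of i] \<psi>0 unfolding zariski_closure_def by blast
      have "p (\<lambda>i. \<psi> i (y i)) = 0" if p: "multihom_poly d p" "\<forall>z\<in>(\<lambda>y i. \<psi> i (y i)) ` S. p z = 0" for d p
      proof -
        have eq: "(\<lambda>y. p (\<lambda>i. matrix (\<psi> i) *v y i)) = (\<lambda>y. p (\<lambda>i. \<psi> i (y i)))"
          by (simp add: matrix_works[OF lin])
        have "multihom_poly d (\<lambda>y. p (\<lambda>i. \<psi> i (y i)))"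
          using mp_comp[OF p(1), of "\<lambda>i. matrix (\<psi> i)"] eq by simp
        moreover have "\<forall>z\<in>S. p (\<lambda>i. \<psi> i (z i)) = 0" using p(2) by blast
        ultimately show ?thesis using y unfolding zariski_closure_def by blast
      qed
      then show "(\<lambda>i. \<psi> i (y i)) \<in> zariski_closure ((\<lambda>y i. \<psi> i (y i)) ` S)"
        unfolding zariski_closure_def using nz by blast
    qed
  next
    show "zariski_closure ((\<lambda>y i. \<psi> i (y i)) ` S) \<subseteq> (\<lambda>y i. \<psi> i (y i)) ` zariski_closure S"
    proof
      fix z assume z: "z \<in> zariski_closure ((\<lambda>y i. \<psi> i (y i)) ` S)"
      define y where "y = (\<lambda>i. \<sigma> i (z i))"
      have zy: "z = (\<lambda>i. \<psi> i (y i))" by (simp add: y_def \<psi>\<sigma>)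
      have nz: "y i \<noteq> 0" for i
      proof
        assume "y i = 0"
        then have "z i = 0" using zy vec.linear_0[OF lin] by simp
        then show False using z unfolding zariski_closure_def by blast
      qed
      have "q y = 0" if q: "multihom_poly d q" "\<forall>s\<in>S. q s = 0" for d q
      proof -
        have eq: "(\<lambda>z. q (\<lambda>i. matrix (\<sigma> i) *v z i)) = (\<lambda>z. q (\<lambda>i. \<sigma> i (z i)))"
          by (simp add: matrix_works[OF lin\<sigma>])
        have "multihom_poly d (\<lambda>z. q (\<lambda>i. \<sigma> i (z i)))"
          using mp_comp[OF q(1), of "\<lambda>i. matrix (\<sigma> i)"] eq by simp
        moreover have "\<forall>w\<in>(\<lambda>y i. \<psi> i (y i)) ` S. q (\<lambda>i. \<sigma> i (w i)) = 0"
        proof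
          fix w assume "w \<in> (\<lambda>y i. \<psi> i (y i)) ` S"
          then obtain s where s: "s \<in> S" "w = (\<lambda>i. \<psi> i (s i))" by blast
          have "(\<lambda>i. \<sigma> i (w i)) = s" using s \<sigma>\<psi> SV' by auto
          then show "q (\<lambda>i. \<sigma> i (w i)) = 0" using q(2) s by simp
        qed
        ultimately have "q (\<lambda>i. \<sigma> i (z i)) = 0" using z unfolding zariski_closure_def by blast
        then show ?thesis by (simp add: y_def)
      qed
      then have "y \<in> zariski_closure S" unfolding zariski_closure_def using nz by blast
      then show "z \<in> (\<lambda>y i. \<psi> i (y i)) ` zariski_closure S" using zy by blast
    qed
  qed
  show "\<forall>y\<in>zariski_closure S. \<forall>y'\<in>zariski_closure S.
           proj_tuple_eq (\<lambda>i. \<psi> i (y i)) (\<lambda>i. \<psi> i (y' i)) \<longrightarrow> proj_tuple_eq y y'"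
  proof (intro ballI impI)
    fix y y' assume y: "y \<in> zariski_closure S" and y': "y' \<in> zariski_closure S"
      and pe: "proj_tuple_eq (\<lambda>i. \<psi> i (y i)) (\<lambda>i. \<psi> i (y' i))"
    show "proj_tuple_eq y y'"
      unfolding proj_tuple_eq_def
    proof
      fix i
      obtain c where c: "c \<noteq> 0" "\<psi> i (y' i) = c *s \<psi> i (y i)" using pe unfolding proj_tuple_eq_def by blast
      have "y' i = c *s y i"
        by (rule inj_onD[OF inj]) (use c clV[OF y] clV[OF y'] Vsc vec.linear_scale[OF lin] in auto)
      then show "\<exists>c. c \<noteq> 0 \<and> y' i = c *s y i" using c by blast
    qed
  qed
qed



lemma exhaust_6:
  fixes x :: 6
  shows "x = 1 \<or> x = 2 \<or> x = 3 \<or> x = 4 \<or> x = 5 \<or> x = 6"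
proof (induct x)
  case (of_int z)
  then have "z = 0 \<or> z = 1 \<or> z = 2 \<or> z = 3 \<or> z = 4 \<or> z = 5" by fastforce
  then show ?case by auto
qed

lemma forall_6: "(\<forall>i::6. P i) \<longleftrightarrow> P 1 \<and> P 2 \<and> P 3 \<and> P 4 \<and> P 5 \<and> P 6"
  by (metis exhaust_6)

lemma vector_6:
 "(vector [a,b,c,d,e,f] ::('a::zero)^6)$1 = a"
 "(vector [a,b,c,d,e,f] ::('a::zero)^6)$2 = b"
 "(vector [a,b,c,d,e,f] ::('a::zero)^6)$3 = c"
 "(vector [a,b,c,d,e,f] ::('a::zero)^6)$4 = d"
 "(vector [a,b,c,d,e,f] ::('a::zero)^6)$5 = e"
 "(vector [a,b,c,d,e,f] ::('a::zero)^6)$6 = f"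
  unfolding vector_def by simp_all

lemma pl_add: "pluecker X (Z1 + Z2) = pluecker X Z1 + pluecker X Z2"
  unfolding vec_eq_iff forall_6 by (simp add: pluecker_def vector_6 algebra_simps)

lemma pl_scale: "pluecker X (c *s Z) = c *s pluecker X Z"
  unfolding vec_eq_iff forall_6 by (simp add: pluecker_def vector_6 algebra_simps)

lemma pl_diff: "pluecker X (Z1 - Z2) = pluecker X Z1 - pluecker X Z2"
  unfolding vec_eq_iff forall_6 by (simp add: pluecker_def vector_6 algebra_simps)

lemma pl_0: "pluecker X 0 = 0"
  unfolding vec_eq_iff forall_6 by (simp add: pluecker_def vector_6 algebra_simps)

lemma pl_self: "pluecker X (t *s X) = 0"
  unfolding vec_eq_iff forall_6 by (simp add: pluecker_def vector_6 algebra_simps)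

lemma pl_self2: "pluecker (t *s Z) Z = 0"
  unfolding vec_eq_iff forall_6 by (simp add: pluecker_def vector_6 algebra_simps)

lemma pl_zero:
  assumes "pluecker X Z = 0" "X \<noteq> 0"
  shows "\<exists>t. Z = t *s X"
proof -
  have e: "X$1*Z$2 = X$2*Z$1" "X$1*Z$3 = X$3*Z$1" "X$1*Z$4 = X$4*Z$1"
     "X$2*Z$3 = X$3*Z$2" "X$2*Z$4 = X$4*Z$2" "X$3*Z$4 = X$4*Z$3"
    using assms(1) unfolding vec_eq_iff forall_6 by (simp_all add: pluecker_def vector_6)
  obtain k where k: "X$k \<noteq> 0" using assms(2) by (metis vec_eq_iff zero_index)
  have "Z = (Z$k / X$k) *s X"
    unfolding vec_eq_iff forall_4
    using exhaust_4[of k] k e by (auto simp: field_simps)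
  then show ?thesis by blast
qed

lemma cc_add: "ccross p (q + r) = ccross p q + ccross p r"
  unfolding vec_eq_iff forall_3 by (simp add: ccross_def algebra_simps)
lemma cc_scale: "ccross p (c *s q) = c *s ccross p q"
  unfolding vec_eq_iff forall_3 by (simp add: ccross_def algebra_simps)
lemma cc_self: "ccross p p = 0"
  unfolding vec_eq_iff forall_3 by (simp add: ccross_def algebra_simps)

lemma bdot_comm: "bdot x y = bdot y x"
  by (simp add: bdot_def mult.commute)

lemma triple: "bdot (ccross p q) (a *s p + b *s q) = 0"
  by (simp add: bdot_def sum_3 ccross_def algebra_simps)

lemma triple2: "bdot p (ccross p q) = 0"
  by (simp add: bdot_def sum_3 ccross_def algebra_simps)

lemma mv_scale: "(A::complex^'n^'m) *v (c *s x) = c *s (A *v x)"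
  by (rule vec.linear_scale[OF matrix_vector_mul_linear_gen])

lemma span2: "Y \<in> vec.span {u, v} \<Longrightarrow> \<exists>a b. Y = a *s u + b *s v"
  unfolding vec.span_breakdown_eq vec.span_singleton
  by (metis (no_types, lifting) add_diff_cancel_left' diff_add_cancel image_iff)



lemma part1:
  fixes C :: "'m::finite \<Rightarrow> complex^4^3"
  and u v :: "complex^4" and \<phi> :: "complex^4 \<Rightarrow> complex^2" and \<psi> :: "'m \<Rightarrow> complex^3 \<Rightarrow> complex^2"
  assumes lin\<phi>: "Vector_Spaces.linear (*s) (*s) \<phi>" and bij\<phi>: "bij_betw \<phi> (vec.span {u, v}) UNIV"
   and lin\<psi>: "\<And>i. Vector_Spaces.linear (*s) (*s) (\<psi> i)"
   and bij\<psi>: "\<And>i. bij_betw (\<psi> i) (image_line (cam_line (C i) u v)) UNIV"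
  shows "(let Ct = (\<lambda>i. matrix (\<lambda>w. \<psi> i (C i *v inv_into (vec.span {u, v}) \<phi> w)))
         in (\<lambda>y i. \<psi> i (y i)) ` M_line C u v = M11 Ct \<and>
            (\<forall>y\<in>M_line C u v. \<forall>y'\<in>M_line C u v.
               proj_tuple_eq (\<lambda>i. \<psi> i (y i)) (\<lambda>i. \<psi> i (y' i)) \<longrightarrow> proj_tuple_eq y y'))"
proof -
  define W where "W = vec.span {u, v}"
  define \<phi>i where "\<phi>i = inv_into W \<phi>"
  define S where "S = {(\<lambda>i. C i *v Y) | Y. Y \<in> vec.span {u, v} \<and> Y \<noteq> 0 \<and> (\<forall>i. C i *v Y \<noteq> 0)}"
  define l where "l i = cam_line (C i) u v" for i
  have bij\<psi>': "bij_betw (\<psi> i) {x. bdot (l i) x = 0} UNIV" for i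
    using bij\<psi>[of i] by (simp add: image_line_def l_def)
  have inW: "Y \<in> W \<Longrightarrow> bdot (l i) (C i *v Y) = 0" for Y i
  proof -
    assume "Y \<in> W"
    then obtain a b where "Y = a *s u + b *s v" using span2 W_def by blast
    then show ?thesis
      by (simp add: l_def cam_line_def matrix_vector_right_distrib mv_scale triple)
  qed
  have SV: "s \<in> S \<Longrightarrow> bdot (l i) (s i) = 0" for s i
    using inW unfolding S_def W_def by auto
  have inj\<phi>: "inj_on \<phi> W" and sur\<phi>: "\<phi> ` W = UNIV" using bij\<phi> by (auto simp: bij_betw_def W_def)
  have lin\<phi>i: "Vector_Spaces.linear (*s) (*s) \<phi>i"
    unfolding \<phi>i_def by (rule linear_inv_sub[OF lin\<phi>]) (use bij\<phi> in \<open>auto simp: W_def vec.span_add vec.span_scale\<close>)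
  have \<phi>iW: "\<phi>i w \<in> W" for w unfolding \<phi>i_def using sur\<phi> by (metis UNIV_I inv_into_into)
  have \<phi>\<phi>i: "\<phi> (\<phi>i w) = w" for w unfolding \<phi>i_def using sur\<phi> by (simp add: f_inv_into_f)
  have \<phi>i\<phi>: "Y \<in> W \<Longrightarrow> \<phi>i (\<phi> Y) = Y" for Y unfolding \<phi>i_def using inj\<phi> by simp
  have W0: "0 \<in> W" by (simp add: W_def vec.span_zero)
  have inj\<psi>: "inj_on (\<psi> i) {x. bdot (l i) x = 0}" for i using bij\<psi>' by (auto simp: bij_betw_def)
  have \<psi>0: "bdot (l i) x = 0 \<Longrightarrow> \<psi> i x = 0 \<longleftrightarrow> x = 0" for x i
    using inj_onD[OF inj\<psi>, of i x 0] vec.linear_0[OF lin\<psi>] by (auto simp: bdot_def)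
  define g where "g i = (\<lambda>w. \<psi> i (C i *v \<phi>i w))" for i
  have ling: "Vector_Spaces.linear (*s) (*s) (g i)" for i
    by (rule vlinI) (simp_all add: g_def vec.linear_add[OF lin\<phi>i] vec.linear_add[OF lin\<psi>]
        matrix_vector_right_distrib vec.linear_scale[OF lin\<phi>i] mv_scale vec.linear_scale[OF lin\<psi>])
  have Ct: "matrix (\<lambda>w. \<psi> i (C i *v inv_into (vec.span {u, v}) \<phi> w)) *v Y = \<psi> i (C i *v \<phi>i Y)" for i Y
    using matrix_works[OF ling[of i], of Y] by (simp add: g_def \<phi>i_def W_def)
  have setEq: "{(\<lambda>i. matrix (\<lambda>w. \<psi> i (C i *v inv_into (vec.span {u, v}) \<phi> w)) *v Y) | Y. Y \<noteq> 0 \<and>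
      (\<forall>i. matrix (\<lambda>w. \<psi> i (C i *v inv_into (vec.span {u, v}) \<phi> w)) *v Y \<noteq> 0)}
     = (\<lambda>y i. \<psi> i (y i)) ` S"
  proof (intro equalityI subsetI)
    fix z assume "z \<in> {(\<lambda>i. matrix (\<lambda>w. \<psi> i (C i *v inv_into (vec.span {u, v}) \<phi> w)) *v Y) | Y. Y \<noteq> 0 \<and>
      (\<forall>i. matrix (\<lambda>w. \<psi> i (C i *v inv_into (vec.span {u, v}) \<phi> w)) *v Y \<noteq> 0)}"
    then obtain Y where Y: "Y \<noteq> 0" "\<forall>i. \<psi> i (C i *v \<phi>i Y) \<noteq> 0" "z = (\<lambda>i. \<psi> i (C i *v \<phi>i Y))"
      unfolding Ct by blast
    have "\<phi>i Y \<noteq> 0" using Y(1) \<phi>\<phi>i[of Y] vec.linear_0[OF lin\<phi>] by auto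
    moreover have "C i *v \<phi>i Y \<noteq> 0" for i using Y(2) vec.linear_0[OF lin\<psi>] by metis
    ultimately have "(\<lambda>i. C i *v \<phi>i Y) \<in> S" unfolding S_def using \<phi>iW W_def by blast
    then show "z \<in> (\<lambda>y i. \<psi> i (y i)) ` S"
      by (rule image_eqI[where x="\<lambda>i. C i *v \<phi>i Y", rotated]) (simp add: Y(3))
  next
    fix z assume "z \<in> (\<lambda>y i. \<psi> i (y i)) ` S"
    then obtain Y where Y: "Y \<in> W" "Y \<noteq> 0" "\<forall>i. C i *v Y \<noteq> 0" "z = (\<lambda>i. \<psi> i (C i *v Y))"
      unfolding S_def W_def by blast
    have "\<phi> Y \<noteq> 0" using inj_onD[OF inj\<phi> _ Y(1) W0] Y(2) vec.linear_0[OF lin\<phi>] by metis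
    moreover have "\<psi> i (C i *v \<phi>i (\<phi> Y)) \<noteq> 0" for i
      using \<phi>i\<phi>[OF Y(1)] Y(3) \<psi>0[OF inW[OF Y(1)]] by simp
    moreover have "z = (\<lambda>i. \<psi> i (C i *v \<phi>i (\<phi> Y)))" using \<phi>i\<phi>[OF Y(1)] Y(4) by simp
    ultimately show "z \<in> {(\<lambda>i. matrix (\<lambda>w. \<psi> i (C i *v inv_into (vec.span {u, v}) \<phi> w)) *v Y) | Y. Y \<noteq> 0 \<and>
      (\<forall>i. matrix (\<lambda>w. \<psi> i (C i *v inv_into (vec.span {u, v}) \<phi> w)) *v Y \<noteq> 0)}"
      unfolding Ct by blast
  qed
  have MS: "M_line C u v = zariski_closure S" by (simp add: M_line_def S_def)
  have tr1: "(\<lambda>y i. \<psi> i (y i)) ` zariski_closure S = zariski_closure ((\<lambda>y i. \<psi> i (y i)) ` S)"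
    by (rule transfer(1)[where a=l]) (auto intro: lin\<psi> bij\<psi>' SV)
  have tr2: "\<forall>y\<in>zariski_closure S. \<forall>y'\<in>zariski_closure S.
           proj_tuple_eq (\<lambda>i. \<psi> i (y i)) (\<lambda>i. \<psi> i (y' i)) \<longrightarrow> proj_tuple_eq y y'"
    by (rule transfer(2)[where a=l]) (auto intro: lin\<psi> bij\<psi>' SV)
  show ?thesis
    unfolding Let_def M11_def setEq MS
    using tr1 tr2 by blast
qed



lemma camL:
  assumes "X \<noteq> 0"
  shows "cam_on_Lambda C X (pluecker X Z) = cam_line C X Z"
proof -
  define Z' where "Z' = (SOME Z'. pluecker X Z' = pluecker X Z)"
  have "pluecker X Z' = pluecker X Z" unfolding Z'_def by (rule someI) (rule refl)
  then have "pluecker X (Z' - Z) = 0" by (simp add: pl_diff)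
  then obtain t where "Z' - Z = t *s X" using pl_zero assms by blast
  then have "Z' = Z + t *s X" by (simp add: algebra_simps)
  then show ?thesis
    by (simp add: cam_on_Lambda_def Z'_def[symmetric] cam_line_def matrix_vector_right_distrib
        mv_scale cc_add cc_scale cc_self)
qed

lemma ind1:
  assumes "X \<noteq> 0" "vec.independent {X, Z}" "X \<noteq> Z"
  shows "pluecker X Z \<noteq> 0"
proof
  assume "pluecker X Z = 0"
  then obtain t where t: "Z = t *s X" using pl_zero assms(1) by blast
  have "{X, Z} - {Z} = {X}" using assms(3) by auto
  moreover have "Z \<in> vec.span {X}" using t by (simp add: vec.span_scale vec.span_base)
  ultimately have "vec.dependent {X, Z}" unfolding vec.dependent_def by auto
  then show False using assms(2) by simp
qed

lemma ind2:
  assumes "X \<noteq> 0" "pluecker X Z \<noteq> 0"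
  shows "vec.independent {X, Z} \<and> X \<noteq> Z"
proof
  show "X \<noteq> Z" using assms(2) pl_self[of X 1] by auto
  show "vec.independent {X, Z}"
  proof
    assume "vec.dependent {X, Z}"
    then obtain a where a: "a \<in> {X, Z}" "a \<in> vec.span ({X, Z} - {a})" unfolding vec.dependent_def by blast
    show False
    proof (cases "a = X")
      case True
      then have "X \<in> vec.span {Z}" using a(2) vec.span_mono[of "{X, Z} - {X}" "{Z}"] by auto
      then obtain t where "X = t *s Z" by (auto simp: vec.span_singleton)
      then show False using assms(2) pl_self2 by simp
    next
      case False
      then have "a = Z" using a(1) by auto
      then have "Z \<in> vec.span {X}" using a(2) vec.span_mono[of "{X, Z} - {Z}" "{X}"] by auto
      then obtain t where "Z = t *s X" by (auto simp: vec.span_singleton)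
      then show False using assms(2) pl_self by simp
    qed
  qed
qed

lemma camL_add:
  assumes "X \<noteq> 0"
  shows "cam_on_Lambda C X (pluecker X Z1 + pluecker X Z2) = cam_on_Lambda C X (pluecker X Z1) + cam_on_Lambda C X (pluecker X Z2)"
  unfolding pl_add[symmetric] camL[OF assms] by (simp add: cam_line_def matrix_vector_right_distrib cc_add)

lemma camL_scale:
  assumes "X \<noteq> 0"
  shows "cam_on_Lambda C X (c *s pluecker X Z) = c *s cam_on_Lambda C X (pluecker X Z)"
  unfolding pl_scale[symmetric] camL[OF assms] by (simp add: cam_line_def mv_scale cc_scale)

lemma part2:
  fixes C :: "'m::finite \<Rightarrow> complex^4^3"
  and X :: "complex^4" and \<phi> :: "complex^6 \<Rightarrow> complex^3" and \<psi> :: "'m \<Rightarrow> complex^3 \<Rightarrow> complex^2"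
  assumes X0: "X \<noteq> 0" and lin\<phi>: "Vector_Spaces.linear (*s) (*s) \<phi>" and bij\<phi>: "bij_betw \<phi> (Lambda_pt X) UNIV"
   and lin\<psi>: "\<And>i. Vector_Spaces.linear (*s) (*s) (\<psi> i)"
   and bij\<psi>: "\<And>i. bij_betw (\<psi> i) (dual_pencil (C i *v X)) UNIV"
  shows "(let Ch = (\<lambda>i. matrix (\<lambda>w. \<psi> i (cam_on_Lambda (C i) X (inv_into (Lambda_pt X) \<phi> w))))
         in (\<lambda>y i. \<psi> i (y i)) ` L_point C X = M21 Ch \<and>
            (\<forall>y\<in>L_point C X. \<forall>y'\<in>L_point C X.
               proj_tuple_eq (\<lambda>i. \<psi> i (y i)) (\<lambda>i. \<psi> i (y' i)) \<longrightarrow> proj_tuple_eq y y'))"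
proof -
  define W where "W = Lambda_pt X"
  define \<phi>i where "\<phi>i = inv_into W \<phi>"
  define S where "S = {(\<lambda>i. cam_line (C i) X Z) | Z. vec.independent {X, Z} \<and> X \<noteq> Z \<and> (\<forall>i. cam_line (C i) X Z \<noteq> 0)}"
  define l where "l i = C i *v X" for i
  have bij\<psi>': "bij_betw (\<psi> i) {x. bdot (l i) x = 0} UNIV" for i
    using bij\<psi>[of i] by (simp add: dual_pencil_def l_def bdot_comm)
  have inV: "bdot (l i) (cam_line (C i) X Z) = 0" for Z i
    by (simp add: l_def cam_line_def triple2)
  have SV: "s \<in> S \<Longrightarrow> bdot (l i) (s i) = 0" for s i
    using inV unfolding S_def by auto
  have inj\<phi>: "inj_on \<phi> W" and sur\<phi>: "\<phi> ` W = UNIV" using bij\<phi> by (auto simp: bij_betw_def W_def)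
  have Wadd: "x \<in> W \<Longrightarrow> y \<in> W \<Longrightarrow> x + y \<in> W" for x y
    unfolding W_def Lambda_pt_def by (auto simp: pl_add[symmetric])
  have Wsc: "x \<in> W \<Longrightarrow> c *s x \<in> W" for x c
    unfolding W_def Lambda_pt_def by (auto simp: pl_scale[symmetric])
  have lin\<phi>i: "Vector_Spaces.linear (*s) (*s) \<phi>i"
    unfolding \<phi>i_def by (rule linear_inv_sub[OF lin\<phi>]) (use bij\<phi> Wadd Wsc in \<open>auto simp: W_def\<close>)
  have \<phi>iW: "\<phi>i w \<in> W" for w unfolding \<phi>i_def using sur\<phi> by (metis UNIV_I inv_into_into)
  have \<phi>\<phi>i: "\<phi> (\<phi>i w) = w" for w unfolding \<phi>i_def using sur\<phi> by (simp add: f_inv_into_f)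
  have \<phi>i\<phi>: "Y \<in> W \<Longrightarrow> \<phi>i (\<phi> Y) = Y" for Y unfolding \<phi>i_def using inj\<phi> by simp
  have W0: "0 \<in> W" unfolding W_def Lambda_pt_def using pl_0 by (metis rangeI)
  have rep: "\<exists>Z. \<phi>i w = pluecker X Z" for w using \<phi>iW[of w] by (auto simp: W_def Lambda_pt_def)
  have inj\<psi>: "inj_on (\<psi> i) {x. bdot (l i) x = 0}" for i using bij\<psi>' by (auto simp: bij_betw_def)
  have \<psi>0: "bdot (l i) x = 0 \<Longrightarrow> \<psi> i x = 0 \<longleftrightarrow> x = 0" for x i
    using inj_onD[OF inj\<psi>, of i x 0] vec.linear_0[OF lin\<psi>] by (auto simp: bdot_def)
  define g where "g i = (\<lambda>w. \<psi> i (cam_on_Lambda (C i) X (\<phi>i w)))" for i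
  have ling: "Vector_Spaces.linear (*s) (*s) (g i)" for i
  proof (rule vlinI)
    fix x y
    obtain Zx Zy where "\<phi>i x = pluecker X Zx" "\<phi>i y = pluecker X Zy" using rep by blast
    then show "g i (x + y) = g i x + g i y"
      by (simp add: g_def vec.linear_add[OF lin\<phi>i] camL_add[OF X0] vec.linear_add[OF lin\<psi>])
  next
    fix c x
    obtain Zx where "\<phi>i x = pluecker X Zx" using rep by blast
    then show "g i (c *s x) = c *s g i x"
      by (simp add: g_def vec.linear_scale[OF lin\<phi>i] camL_scale[OF X0] vec.linear_scale[OF lin\<psi>])
  qed
  have Ch: "matrix (\<lambda>w. \<psi> i (cam_on_Lambda (C i) X (inv_into (Lambda_pt X) \<phi> w))) *v Y = g i Y" for i Y
    using matrix_works[OF ling[of i], of Y] by (simp add: g_def \<phi>i_def W_def)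
  have setEq: "{(\<lambda>i. matrix (\<lambda>w. \<psi> i (cam_on_Lambda (C i) X (inv_into (Lambda_pt X) \<phi> w))) *v Y) | Y. Y \<noteq> 0 \<and>
      (\<forall>i. matrix (\<lambda>w. \<psi> i (cam_on_Lambda (C i) X (inv_into (Lambda_pt X) \<phi> w))) *v Y \<noteq> 0)}
     = (\<lambda>y i. \<psi> i (y i)) ` S"
  proof (intro equalityI subsetI)
    fix z assume "z \<in> {(\<lambda>i. matrix (\<lambda>w. \<psi> i (cam_on_Lambda (C i) X (inv_into (Lambda_pt X) \<phi> w))) *v Y) | Y. Y \<noteq> 0 \<and>
      (\<forall>i. matrix (\<lambda>w. \<psi> i (cam_on_Lambda (C i) X (inv_into (Lambda_pt X) \<phi> w))) *v Y \<noteq> 0)}"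
    then obtain Y where Y: "Y \<noteq> 0" "\<forall>i. g i Y \<noteq> 0" "z = (\<lambda>i. g i Y)"
      unfolding Ch by blast
    obtain Z where Z: "\<phi>i Y = pluecker X Z" using rep by blast
    have gZ: "g i Y = \<psi> i (cam_line (C i) X Z)" for i by (simp add: g_def Z camL[OF X0])
    have "pluecker X Z \<noteq> 0" using Y(1) \<phi>\<phi>i[of Y] vec.linear_0[OF lin\<phi>] Z by auto
    then have iZ: "vec.independent {X, Z} \<and> X \<noteq> Z" using ind2[OF X0] by blast
    moreover have "cam_line (C i) X Z \<noteq> 0" for i using Y(2) gZ vec.linear_0[OF lin\<psi>] by metis
    ultimately have "(\<lambda>i. cam_line (C i) X Z) \<in> S" unfolding S_def by blast
    then show "z \<in> (\<lambda>y i. \<psi> i (y i)) ` S"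
      by (rule image_eqI[where x="\<lambda>i. cam_line (C i) X Z", rotated]) (simp add: Y(3) gZ)
  next
    fix z assume "z \<in> (\<lambda>y i. \<psi> i (y i)) ` S"
    then obtain Z where Z: "vec.independent {X, Z}" "X \<noteq> Z" "\<forall>i. cam_line (C i) X Z \<noteq> 0"
       "z = (\<lambda>i. \<psi> i (cam_line (C i) X Z))"
      unfolding S_def by blast
    define p where "p = pluecker X Z"
    have pW: "p \<in> W" by (simp add: p_def W_def Lambda_pt_def)
    have p0: "p \<noteq> 0" using ind1[OF X0 Z(1,2)] p_def by simp
    have "\<phi> p \<noteq> 0" using inj_onD[OF inj\<phi> _ pW W0] p0 vec.linear_0[OF lin\<phi>] by metis
    moreover have gp: "g i (\<phi> p) = \<psi> i (cam_line (C i) X Z)" for i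
      using \<phi>i\<phi>[OF pW] by (simp add: g_def p_def camL[OF X0])
    moreover have "\<psi> i (cam_line (C i) X Z) \<noteq> 0" for i
      using Z(3) \<psi>0[OF inV] by simp
    moreover have "z = (\<lambda>i. g i (\<phi> p))" using gp Z(4) by simp
    ultimately show "z \<in> {(\<lambda>i. matrix (\<lambda>w. \<psi> i (cam_on_Lambda (C i) X (inv_into (Lambda_pt X) \<phi> w))) *v Y) | Y. Y \<noteq> 0 \<and>
      (\<forall>i. matrix (\<lambda>w. \<psi> i (cam_on_Lambda (C i) X (inv_into (Lambda_pt X) \<phi> w))) *v Y \<noteq> 0)}"
      unfolding Ch by (intro CollectI exI[of _ "\<phi> p"]) auto
  qed
  have MS: "L_point C X = zariski_closure S" by (simp add: L_point_def S_def)
  have tr1: "(\<lambda>y i. \<psi> i (y i)) ` zariski_closure S = zariski_closure ((\<lambda>y i. \<psi> i (y i)) ` S)"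
    by (rule transfer(1)[where a=l]) (auto intro: lin\<psi> bij\<psi>' SV)
  have tr2: "\<forall>y\<in>zariski_closure S. \<forall>y'\<in>zariski_closure S.
           proj_tuple_eq (\<lambda>i. \<psi> i (y i)) (\<lambda>i. \<psi> i (y' i)) \<longrightarrow> proj_tuple_eq y y'"
    by (rule transfer(2)[where a=l]) (auto intro: lin\<psi> bij\<psi>' SV)
  show ?thesis
    unfolding Let_def M21_def setEq MS
    using tr1 tr2 by blast
qed

theorem theorem1p3:
  fixes C :: "'m::finite \<Rightarrow> complex^4^3"
  assumes "camera_arrangement C"
  shows
  "(\<forall>(u::complex^4) v (\<phi>::complex^4 \<Rightarrow> complex^2) (\<psi>::'m \<Rightarrow> complex^3 \<Rightarrow> complex^2).
      vec.independent {u, v} \<and> u \<noteq> v \<and>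
      (\<forall>i. \<not> (\<exists>c \<in> vec.span {u, v}. is_center (C i) c)) \<and>
      Vector_Spaces.linear (*s) (*s) \<phi> \<and> bij_betw \<phi> (vec.span {u, v}) UNIV \<and>
      (\<forall>i. Vector_Spaces.linear (*s) (*s) (\<psi> i) \<and>
           bij_betw (\<psi> i) (image_line (cam_line (C i) u v)) UNIV)
    \<longrightarrow> (let Ct = (\<lambda>i. matrix (\<lambda>w. \<psi> i (C i *v inv_into (vec.span {u, v}) \<phi> w)))
         in (\<lambda>y i. \<psi> i (y i)) ` M_line C u v = M11 Ct \<and>
            (\<forall>y\<in>M_line C u v. \<forall>y'\<in>M_line C u v.
               proj_tuple_eq (\<lambda>i. \<psi> i (y i)) (\<lambda>i. \<psi> i (y' i)) \<longrightarrow> proj_tuple_eq y y')))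
   \<and>
   (\<forall>(X::complex^4) (\<phi>::complex^6 \<Rightarrow> complex^3) (\<psi>::'m \<Rightarrow> complex^3 \<Rightarrow> complex^2).
      X \<noteq> 0 \<and> (\<forall>i. \<not> is_center (C i) X) \<and>
      Vector_Spaces.linear (*s) (*s) \<phi> \<and> bij_betw \<phi> (Lambda_pt X) UNIV \<and>
      (\<forall>i. Vector_Spaces.linear (*s) (*s) (\<psi> i) \<and>
           bij_betw (\<psi> i) (dual_pencil (C i *v X)) UNIV)
    \<longrightarrow> (let Ch = (\<lambda>i. matrix (\<lambda>w. \<psi> i (cam_on_Lambda (C i) X (inv_into (Lambda_pt X) \<phi> w))))
         in (\<lambda>y i. \<psi> i (y i)) ` L_point C X = M21 Ch \<and>
            (\<forall>y\<in>L_point C X. \<forall>y'\<in>L_point C X.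
               proj_tuple_eq (\<lambda>i. \<psi> i (y i)) (\<lambda>i. \<psi> i (y' i)) \<longrightarrow> proj_tuple_eq y y')))"
  proof (intro conjI allI impI)
  fix u v :: "complex^4" and \<phi> :: "complex^4 \<Rightarrow> complex^2" and \<psi> :: "'m \<Rightarrow> complex^3 \<Rightarrow> complex^2"
  assume h: "vec.independent {u, v} \<and> u \<noteq> v \<and>
      (\<forall>i. \<not> (\<exists>c \<in> vec.span {u, v}. is_center (C i) c)) \<and>
      Vector_Spaces.linear (*s) (*s) \<phi> \<and> bij_betw \<phi> (vec.span {u, v}) UNIV \<and>
      (\<forall>i. Vector_Spaces.linear (*s) (*s) (\<psi> i) \<and>
           bij_betw (\<psi> i) (image_line (cam_line (C i) u v)) UNIV)"
  show "let Ct = (\<lambda>i. matrix (\<lambda>w. \<psi> i (C i *v inv_into (vec.span {u, v}) \<phi> w)))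
         in (\<lambda>y i. \<psi> i (y i)) ` M_line C u v = M11 Ct \<and>
            (\<forall>y\<in>M_line C u v. \<forall>y'\<in>M_line C u v.
               proj_tuple_eq (\<lambda>i. \<psi> i (y i)) (\<lambda>i. \<psi> i (y' i)) \<longrightarrow> proj_tuple_eq y y')"
    by (rule part1) (use h in auto)
next
  fix X :: "complex^4" and \<phi> :: "complex^6 \<Rightarrow> complex^3" and \<psi> :: "'m \<Rightarrow> complex^3 \<Rightarrow> complex^2"
  assume h: "X \<noteq> 0 \<and> (\<forall>i. \<not> is_center (C i) X) \<and>
      Vector_Spaces.linear (*s) (*s) \<phi> \<and> bij_betw \<phi> (Lambda_pt X) UNIV \<and>
      (\<forall>i. Vector_Spaces.linear (*s) (*s) (\<psi> i) \<and>
           bij_betw (\<psi> i) (dual_pencil (C i *v X)) UNIV)"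
  show "let Ch = (\<lambda>i. matrix (\<lambda>w. \<psi> i (cam_on_Lambda (C i) X (inv_into (Lambda_pt X) \<phi> w))))
         in (\<lambda>y i. \<psi> i (y i)) ` L_point C X = M21 Ch \<and>
            (\<forall>y\<in>L_point C X. \<forall>y'\<in>L_point C X.
               proj_tuple_eq (\<lambda>i. \<psi> i (y i)) (\<lambda>i. \<psi> i (y' i)) \<longrightarrow> proj_tuple_eq y y')"
    by (rule part2) (use h in auto)
qed

end
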